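(* With notation as in the context, fix any $j_0\in\Omega_2\setminus\{1\}$ and $t_0\in\Omega_1\setminus\{1\}$, and define elements $A_{i,k}\in\mathcal{U}(\mathcal{J}_{\mathbb{F}})$ for $i,k\in\Omega_1\cup\Omega_3$ by: $A_{i,k}=G_{i,1}G_{k,1}$ for $i,k\in\Omega_1$, $i\neq k$; $A_{1,p+1}=G_{1,j_0}G_{1,j_0}G_{1,1}$; $A_{i,k}=G_{i,1}G_{1,1}G_{1,k-p}$ for $i\in\Omega_1$, $k\in\Omega_3$, $(i,k)\neq(1,p+1)$; $A_{i,k}=-A_{k,i}+G_{k,i-p}$ for $i\in\Omega_3$, $k\in\Omega_1$; $A_{i,k}=G_{1,i-p}G_{1,k-p}$ for $i,k\in\Omega_3$, $i\neq k$; $A_{1,1}=G_{1,1}G_{1,1}G_{1,j_0}G_{1,j_0}$; $A_{i,i}=-G_{1,1}G_{1,1}G_{t_0,1}G_{t_0,1}+G_{i,1}G_{i,1}$ for $i\in\Omega_1\setminus\{1\}$; $A_{i,i}=-G_{1,1}G_{1,1}G_{1,j_0}G_{1,j_0}+G_{1,i-p}G_{1,i-p}$ for $i\in\Omega_3$. Then these elements do not depend on the choices of $j_0,t_0$, they satisfy $A_{i,k}A_{\ell,t}=\delta_{k,\ell}A_{i,t}$ for all $i,k,\ell,t\in\Omega_1\cup\Omega_3$, and $G_{i,j}=A_{i,j+p}+A_{j+p,i}$ for all $i\in\Omega_1$, $j\in\Omega_2$.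
   Context: Let $\mathbb{F}$ be a field of characteristic $0$ and $p,q>1$ integers with $p\neq q$. Let $\mathcal{J}_{\mathbb{F}}$ be the vector space $M_{p\times q}(\mathbb{F})$ of $p\times q$ matrices with the Jordan triple product $\{x,y,z\}=xy^tz+zy^tx$ ($y^t$ the transpose). Put $\Omega_1=\{1,\dots,p\}$, $\Omega_2=\{1,\dots,q\}$, $\Omega_3=\{p+1,\dots,p+q\}$, and let $E_{i,j}$ ($i\in\Omega_1$, $j\in\Omega_2$) be the standard matrix units of $M_{p\times q}(\mathbb{F})$. Let $\mathfrak{F}$ be the free associative algebra (without identity element) over $\mathbb{F}$ on symbols $G_{i,j}$ ($i\in\Omega_1$, $j\in\Omega_2$), and let $\Phi:\mathcal{J}_{\mathbb{F}}\to\mathfrak{F}$ be the linear map with $\Phi(E_{i,j})=G_{i,j}$. Let $I$ be the two-sided ideal of $\mathfrak{F}$ generated by all elements $G_{i,j}G_{k,\ell}G_{s,t}+G_{s,t}G_{k,\ell}G_{i,j}-\Phi(\{E_{i,j},E_{k,\ell},E_{s,t}\})$ ($i,k,s\in\Omega_1$; $j,\ell,t\in\Omega_2$). The universal associative envelope is $\mathcal{U}(\mathcal{J}_{\mathbb{F}})=\mathfrak{F}/I$; the image of $G_{i,j}$ in it is again denoted $G_{i,j}$. $\delta_{k,\ell}$ is the Kronecker delta. *)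

theory Defs
  imports Main
begin

definition Om1 :: "nat \<Rightarrow> nat set" where "Om1 p = {1..p}"
definition Om2 :: "nat \<Rightarrow> nat set" where "Om2 q = {1..q}"
definition Om3 :: "nat \<Rightarrow> nat \<Rightarrow> nat set" where "Om3 p q = {p+1..p+q}"

text \<open>Elements of the free associative algebra (without identity) on symbols G(i,j):
  coefficient functions on words (lists of symbols).\<close>
type_synonym 'a fa = "(nat \<times> nat) list \<Rightarrow> 'a"

definition FA :: "nat \<Rightarrow> nat \<Rightarrow> ('a::field) fa set" where
  "FA p q = {f. finite {w. f w \<noteq> 0} \<and> f [] = 0 \<and>
                 (\<forall>w. f w \<noteq> 0 \<longrightarrow> set w \<subseteq> Om1 p \<times> Om2 q)}"

definition fa_zero :: "('a::field) fa" where "fa_zero = (\<lambda>w. 0)"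
definition fa_add :: "('a::field) fa \<Rightarrow> 'a fa \<Rightarrow> 'a fa" where
  "fa_add f g = (\<lambda>w. f w + g w)"
definition fa_neg :: "('a::field) fa \<Rightarrow> 'a fa" where
  "fa_neg f = (\<lambda>w. - f w)"
definition fa_sub :: "('a::field) fa \<Rightarrow> 'a fa \<Rightarrow> 'a fa" where
  "fa_sub f g = (\<lambda>w. f w - g w)"
definition fa_smult :: "'a::field \<Rightarrow> 'a fa \<Rightarrow> 'a fa" where
  "fa_smult c f = (\<lambda>w. c * f w)"
definition fa_mult :: "('a::field) fa \<Rightarrow> 'a fa \<Rightarrow> 'a fa" where
  "fa_mult f g = (\<lambda>w. \<Sum>k\<in>{0..length w}. f (take k w) * g (drop k w))"

definition Gen :: "nat \<Rightarrow> nat \<Rightarrow> ('a::field) fa" where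
  "Gen i j = (\<lambda>w. if w = [(i,j)] then 1 else 0)"

definition Emat :: "nat \<Rightarrow> nat \<Rightarrow> nat \<Rightarrow> nat \<Rightarrow> 'a::field" where
  "Emat i j = (\<lambda>a b. if a = i \<and> b = j then 1 else 0)"

definition jtp :: "nat \<Rightarrow> nat \<Rightarrow> (nat \<Rightarrow> nat \<Rightarrow> 'a::field) \<Rightarrow> (nat \<Rightarrow> nat \<Rightarrow> 'a)
    \<Rightarrow> (nat \<Rightarrow> nat \<Rightarrow> 'a) \<Rightarrow> (nat \<Rightarrow> nat \<Rightarrow> 'a)" where
  "jtp p q x y z = (\<lambda>a b. \<Sum>c\<in>Om2 q. \<Sum>d\<in>Om1 p.
      x a c * y d c * z d b + z a c * y d c * x d b)"

definition Phi :: "nat \<Rightarrow> nat \<Rightarrow> (nat \<Rightarrow> nat \<Rightarrow> 'a::field) \<Rightarrow> 'a fa" where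
  "Phi p q M = (\<lambda>w. \<Sum>i\<in>Om1 p. \<Sum>j\<in>Om2 q. M i j * Gen i j w)"

definition rel :: "nat \<Rightarrow> nat \<Rightarrow> nat \<Rightarrow> nat \<Rightarrow> nat \<Rightarrow> nat \<Rightarrow> nat \<Rightarrow> nat \<Rightarrow> ('a::field) fa" where
  "rel p q i j k l s t =
     fa_sub (fa_add (fa_mult (fa_mult (Gen i j) (Gen k l)) (Gen s t))
                    (fa_mult (fa_mult (Gen s t) (Gen k l)) (Gen i j)))
            (Phi p q (jtp p q (Emat i j) (Emat k l) (Emat s t)))"

inductive_set Ideal :: "nat \<Rightarrow> nat \<Rightarrow> ('a::field) fa set" for p q :: nat where
  gen: "\<lbrakk>i \<in> Om1 p; k \<in> Om1 p; s \<in> Om1 p; j \<in> Om2 q; l \<in> Om2 q; t \<in> Om2 q\<rbrakk>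
          \<Longrightarrow> rel p q i j k l s t \<in> Ideal p q"
| zero: "fa_zero \<in> Ideal p q"
| add: "\<lbrakk>x \<in> Ideal p q; y \<in> Ideal p q\<rbrakk> \<Longrightarrow> fa_add x y \<in> Ideal p q"
| smult: "x \<in> Ideal p q \<Longrightarrow> fa_smult c x \<in> Ideal p q"
| lmult: "\<lbrakk>a \<in> FA p q; x \<in> Ideal p q\<rbrakk> \<Longrightarrow> fa_mult a x \<in> Ideal p q"
| rmult: "\<lbrakk>a \<in> FA p q; x \<in> Ideal p q\<rbrakk> \<Longrightarrow> fa_mult x a \<in> Ideal p q"

text \<open>Equality of images in U(J) = F / I.\<close>
definition ueq :: "nat \<Rightarrow> nat \<Rightarrow> ('a::field) fa \<Rightarrow> 'a fa \<Rightarrow> bool" where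
  "ueq p q x y \<longleftrightarrow> fa_sub x y \<in> Ideal p q"

abbreviation m3 :: "('a::field) fa \<Rightarrow> 'a fa \<Rightarrow> 'a fa \<Rightarrow> 'a fa" where
  "m3 a b c \<equiv> fa_mult (fa_mult a b) c"
abbreviation m4 :: "('a::field) fa \<Rightarrow> 'a fa \<Rightarrow> 'a fa \<Rightarrow> 'a fa \<Rightarrow> 'a fa" where
  "m4 a b c d \<equiv> fa_mult (fa_mult (fa_mult a b) c) d"

definition A13 :: "nat \<Rightarrow> nat \<Rightarrow> nat \<Rightarrow> nat \<Rightarrow> ('a::field) fa" where
  "A13 p j0 i k =
     (if i = 1 \<and> k = p + 1 then m3 (Gen 1 j0) (Gen 1 j0) (Gen 1 1)
      else m3 (Gen i 1) (Gen 1 1) (Gen 1 (k - p)))"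

definition Aelt :: "nat \<Rightarrow> nat \<Rightarrow> nat \<Rightarrow> nat \<Rightarrow> nat \<Rightarrow> nat \<Rightarrow> ('a::field) fa" where
  "Aelt p q j0 t0 i k =
    (if i \<in> Om1 p \<and> k \<in> Om1 p then
       (if i \<noteq> k then fa_mult (Gen i 1) (Gen k 1)
        else if i = 1 then m4 (Gen 1 1) (Gen 1 1) (Gen 1 j0) (Gen 1 j0)
        else fa_add (fa_neg (m4 (Gen 1 1) (Gen 1 1) (Gen t0 1) (Gen t0 1)))
                    (fa_mult (Gen i 1) (Gen i 1)))
     else if i \<in> Om1 p \<and> k \<in> Om3 p q then A13 p j0 i k
     else if i \<in> Om3 p q \<and> k \<in> Om1 p then
       fa_add (fa_neg (A13 p j0 k i)) (Gen k (i - p))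
     else if i \<in> Om3 p q \<and> k \<in> Om3 p q then
       (if i \<noteq> k then fa_mult (Gen 1 (i - p)) (Gen 1 (k - p))
        else fa_add (fa_neg (m4 (Gen 1 1) (Gen 1 1) (Gen 1 j0) (Gen 1 j0)))
                    (fa_mult (Gen 1 (i - p)) (Gen 1 (i - p))))
     else fa_zero)"

end

theory Submission
  imports Defs
begin


lemma fa_ext: "(\<And>w. f w = g w) \<Longrightarrow> f = g" by auto

lemma fa_mult_add_left: "fa_mult (fa_add f g) h = fa_add (fa_mult f h) (fa_mult g h)"
  by (auto simp: fa_mult_def fa_add_def distrib_right sum.distrib)
lemma fa_mult_add_right: "fa_mult h (fa_add f g) = fa_add (fa_mult h f) (fa_mult h g)"
  by (auto simp: fa_mult_def fa_add_def distrib_left sum.distrib)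
lemma fa_mult_sub_left: "fa_mult (fa_sub f g) h = fa_sub (fa_mult f h) (fa_mult g h)"
  by (auto simp: fa_mult_def fa_sub_def left_diff_distrib sum_subtractf)
lemma fa_mult_sub_right: "fa_mult h (fa_sub f g) = fa_sub (fa_mult h f) (fa_mult h g)"
  by (auto simp: fa_mult_def fa_sub_def right_diff_distrib sum_subtractf)
lemma fa_mult_neg_left: "fa_mult (fa_neg f) h = fa_neg (fa_mult f h)"
  by (auto simp: fa_mult_def fa_neg_def sum_negf)
lemma fa_mult_neg_right: "fa_mult h (fa_neg f) = fa_neg (fa_mult h f)"
  by (auto simp: fa_mult_def fa_neg_def sum_negf)
lemma fa_mult_smult_left: "fa_mult (fa_smult c f) h = fa_smult c (fa_mult f h)"
  by (auto simp: fa_mult_def fa_smult_def sum_distrib_left mult.assoc)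
lemma fa_mult_smult_right: "fa_mult h (fa_smult c f) = fa_smult c (fa_mult h f)"
  by (auto simp: fa_mult_def fa_smult_def sum_distrib_left mult.left_commute)
lemma fa_mult_zero_left: "fa_mult fa_zero h = fa_zero"
  by (auto simp: fa_mult_def fa_zero_def)
lemma fa_mult_zero_right: "fa_mult h fa_zero = fa_zero"
  by (auto simp: fa_mult_def fa_zero_def)

lemma fa_mult_assoc: "fa_mult (fa_mult f g) h = fa_mult f (fa_mult g h)"
proof (rule fa_ext)
  fix w :: "(nat \<times> nat) list"
  define n where "n = length w"
  define F where "F = (\<lambda>m r. f (take m w) * g (take r (drop m w)) * h (drop (m + r) w))"
  have "fa_mult (fa_mult f g) h w = (\<Sum>k\<le>n. \<Sum>m\<le>k. F m (k - m))"
    unfolding fa_mult_def F_def n_def atLeast0AtMost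
    by (auto simp: sum_distrib_right min_def take_drop intro!: sum.cong)
  also have "\<dots> = (\<Sum>(m,r)\<in>{(i,j). i + j \<le> n}. F m r)"
    by (rule sum.triangle_reindex_eq[symmetric])
  also have "{(i,j). i + j \<le> n} = Sigma {..n} (\<lambda>m. {..n - m})" by auto
  also have "(\<Sum>(m,r)\<in>Sigma {..n} (\<lambda>m. {..n - m}). F m r) = (\<Sum>m\<le>n. \<Sum>r\<le>n-m. F m r)"
    by (rule sum.Sigma[symmetric]) auto
  also have "\<dots> = fa_mult f (fa_mult g h) w"
    unfolding fa_mult_def F_def n_def atLeast0AtMost
    by (auto simp: sum_distrib_left mult.assoc add.commute intro!: sum.cong)
  finally show "fa_mult (fa_mult f g) h w = fa_mult f (fa_mult g h) w" .
qed


lemma FA_zero: "fa_zero \<in> FA p q" by (auto simp: FA_def fa_zero_def)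

lemma FA_add: "f \<in> FA p q \<Longrightarrow> g \<in> FA p q \<Longrightarrow> fa_add f g \<in> FA p q"
proof -
  assume f: "f \<in> FA p q" and g: "g \<in> FA p q"
  have "{w. fa_add f g w \<noteq> 0} \<subseteq> {w. f w \<noteq> 0} \<union> {w. g w \<noteq> 0}" by (auto simp: fa_add_def)
  with f g show ?thesis unfolding FA_def by (auto simp: fa_add_def intro: finite_subset)
qed

lemma FA_smult: "f \<in> FA p q \<Longrightarrow> fa_smult c f \<in> FA p q"
proof -
  assume f: "f \<in> FA p q"
  have "{w. fa_smult c f w \<noteq> 0} \<subseteq> {w. f w \<noteq> 0}" by (auto simp: fa_smult_def)
  with f show ?thesis unfolding FA_def by (auto simp: fa_smult_def intro: finite_subset)
qed

lemma FA_neg: "f \<in> FA p q \<Longrightarrow> fa_neg f \<in> FA p q"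
proof -
  have "fa_neg f = fa_smult (-1) f" by (auto simp: fa_neg_def fa_smult_def)
  thus "f \<in> FA p q \<Longrightarrow> fa_neg f \<in> FA p q" using FA_smult by metis
qed

lemma fa_sub_eq: "fa_sub f g = fa_add f (fa_smult (-1) g)"
  by (auto simp: fa_sub_def fa_add_def fa_smult_def)

lemma FA_sub: "f \<in> FA p q \<Longrightarrow> g \<in> FA p q \<Longrightarrow> fa_sub f g \<in> FA p q"
  by (simp add: fa_sub_eq FA_add FA_smult)

lemma FA_mult: "f \<in> FA p q \<Longrightarrow> g \<in> FA p q \<Longrightarrow> fa_mult f g \<in> FA p q"
proof -
  assume f: "f \<in> FA p q" and g: "g \<in> FA p q"
  have ex: "\<exists>k. f (take k w) \<noteq> 0 \<and> g (drop k w) \<noteq> 0" if "fa_mult f g w \<noteq> 0" for w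
  proof (rule ccontr)
    assume "\<not> ?thesis"
    hence "fa_mult f g w = 0" unfolding fa_mult_def by (auto intro!: sum.neutral)
    thus False using that by simp
  qed
  have "{w. fa_mult f g w \<noteq> 0} \<subseteq> (\<lambda>(u,v). u @ v) ` ({w. f w \<noteq> 0} \<times> {w. g w \<noteq> 0})"
  proof
    fix w assume "w \<in> {w. fa_mult f g w \<noteq> 0}"
    then obtain k where "f (take k w) \<noteq> 0" "g (drop k w) \<noteq> 0" using ex[of w] by blast
    thus "w \<in> (\<lambda>(u,v). u @ v) ` ({w. f w \<noteq> 0} \<times> {w. g w \<noteq> 0})"
      by (intro image_eqI[of _ _ "(take k w, drop k w)"]) auto
  qed
  moreover have "finite ((\<lambda>(u,v). u @ v) ` ({w. f w \<noteq> 0} \<times> {w. g w \<noteq> 0}))"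
    using f g by (auto simp: FA_def)
  ultimately have fin: "finite {w. fa_mult f g w \<noteq> 0}" by (rule finite_subset)
  have e: "fa_mult f g [] = 0" using f by (simp add: fa_mult_def FA_def)
  have s: "set w \<subseteq> Om1 p \<times> Om2 q" if nz: "fa_mult f g w \<noteq> 0" for w
  proof -
    obtain k where k: "f (take k w) \<noteq> 0" "g (drop k w) \<noteq> 0" using ex[OF nz] by blast
    have "set (take k w) \<subseteq> Om1 p \<times> Om2 q" "set (drop k w) \<subseteq> Om1 p \<times> Om2 q"
      using f g k by (auto simp: FA_def)
    hence "set (take k w @ drop k w) \<subseteq> Om1 p \<times> Om2 q" by (simp only: set_append Un_subset_iff)
    thus ?thesis by simp
  qed
  show ?thesis using fin e s by (auto simp: FA_def)
qed

lemma FA_Gen: "i \<in> Om1 p \<Longrightarrow> j \<in> Om2 q \<Longrightarrow> Gen i j \<in> FA p q"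
proof -
  assume a: "i \<in> Om1 p" "j \<in> Om2 q"
  have "{w. Gen i j w \<noteq> (0::'a)} \<subseteq> {[(i,j)]}" by (auto simp: Gen_def)
  hence "finite {w. Gen i j w \<noteq> (0::'a)}" by (rule finite_subset) auto
  with a show ?thesis by (auto simp: FA_def Gen_def)
qed

lemma Ideal_sub: "x \<in> Ideal p q \<Longrightarrow> y \<in> Ideal p q \<Longrightarrow> fa_sub x y \<in> Ideal p q"
  by (simp add: fa_sub_eq Ideal.add Ideal.smult)

lemma ueq_refl: "ueq p q x x"
proof -
  have "fa_sub x x = fa_zero" by (auto simp: fa_sub_def fa_zero_def)
  thus ?thesis by (simp add: ueq_def Ideal.zero)
qed

lemma ueq_sym: "ueq p q x y \<Longrightarrow> ueq p q y x"
proof -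
  have "fa_sub y x = fa_smult (-1) (fa_sub x y)" by (auto simp: fa_sub_def fa_smult_def)
  thus "ueq p q x y \<Longrightarrow> ueq p q y x" by (simp add: ueq_def Ideal.smult)
qed

lemma ueq_trans: "ueq p q x y \<Longrightarrow> ueq p q y z \<Longrightarrow> ueq p q x z"
proof -
  have "fa_sub x z = fa_add (fa_sub x y) (fa_sub y z)" by (auto simp: fa_sub_def fa_add_def)
  thus "ueq p q x y \<Longrightarrow> ueq p q y z \<Longrightarrow> ueq p q x z" by (simp add: ueq_def Ideal.add)
qed

lemma ueq_add: "ueq p q x x' \<Longrightarrow> ueq p q y y' \<Longrightarrow> ueq p q (fa_add x y) (fa_add x' y')"
proof -
  have "fa_sub (fa_add x y) (fa_add x' y') = fa_add (fa_sub x x') (fa_sub y y')"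
    by (auto simp: fa_sub_def fa_add_def)
  thus "ueq p q x x' \<Longrightarrow> ueq p q y y' \<Longrightarrow> ?thesis" by (simp add: ueq_def Ideal.add)
qed

lemma ueq_neg: "ueq p q x x' \<Longrightarrow> ueq p q (fa_neg x) (fa_neg x')"
proof -
  have "fa_sub (fa_neg x) (fa_neg x') = fa_smult (-1) (fa_sub x x')"
    by (auto simp: fa_sub_def fa_neg_def fa_smult_def)
  thus "ueq p q x x' \<Longrightarrow> ?thesis" by (simp add: ueq_def Ideal.smult)
qed

lemma ueq_mult: "ueq p q x x' \<Longrightarrow> ueq p q y y' \<Longrightarrow> x' \<in> FA p q \<Longrightarrow> y \<in> FA p q
   \<Longrightarrow> ueq p q (fa_mult x y) (fa_mult x' y')"
proof -
  have "fa_sub (fa_mult x y) (fa_mult x' y') = fa_add (fa_mult (fa_sub x x') y) (fa_mult x' (fa_sub y y'))"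
    by (simp only: fa_mult_sub_left fa_mult_sub_right) (auto simp: fa_sub_def fa_add_def)
  thus "ueq p q x x' \<Longrightarrow> ueq p q y y' \<Longrightarrow> x' \<in> FA p q \<Longrightarrow> y \<in> FA p q \<Longrightarrow> ?thesis"
    by (simp add: ueq_def Ideal.add Ideal.lmult Ideal.rmult)
qed

lemma ueq_half: "ueq p q (fa_add x x) fa_zero \<Longrightarrow> ueq p q x (fa_zero :: 'a::field_char_0 fa)"
proof -
  have "fa_sub x fa_zero = fa_smult (1/2) (fa_sub (fa_add x x) fa_zero)"
    by (auto simp: fa_sub_def fa_add_def fa_smult_def fa_zero_def)
  thus "ueq p q (fa_add x x) fa_zero \<Longrightarrow> ?thesis" by (simp add: ueq_def Ideal.smult)
qed

lemma ueq_eq: "x = y \<Longrightarrow> ueq p q x y" by (simp add: ueq_refl)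



lemma Em3: "Emat i j a c * Emat k l d c * Emat s t d b = (if c = j then (if d = k then (if a = i \<and> b = t \<and> j = l \<and> k = s then (1::'a::field) else 0) else 0) else 0)"
  by (simp add: Emat_def)

lemma sum_if_eq: "finite S \<Longrightarrow> x \<in> S \<Longrightarrow> (\<Sum>d\<in>S. if d = x then f else 0) = f"
  by (simp add: sum.delta)
lemma sum_if_const: "(\<Sum>d\<in>S. if P then f d else 0) = (if P then (\<Sum>d\<in>S. f d) else 0)"
  by simp
lemma finite_Om: "finite (Om1 p)" "finite (Om2 q)" by (auto simp: Om1_def Om2_def)

lemma jtp_Emat:
  assumes "i \<in> Om1 p" "k \<in> Om1 p" "j \<in> Om2 q" "t \<in> Om2 q"
  shows "jtp p q (Emat i j) (Emat k l) (Emat s t) a b =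
    (if a = i \<and> b = t \<and> j = l \<and> k = s then 1 else 0) + (if a = s \<and> b = j \<and> t = l \<and> k = i then (1::'a::field) else 0)"
proof -
  have "jtp p q (Emat i j) (Emat k l) (Emat s t) a b =
     (\<Sum>c\<in>Om2 q. \<Sum>d\<in>Om1 p. (if c = j then (if d = k then (if a = i \<and> b = t \<and> j = l \<and> k = s then (1::'a::field) else 0) else 0) else 0))
   + (\<Sum>c\<in>Om2 q. \<Sum>d\<in>Om1 p. (if c = t then (if d = k then (if a = s \<and> b = j \<and> t = l \<and> k = i then (1::'a::field) else 0) else 0) else 0))"
    unfolding jtp_def Em3 by (simp only: sum.distrib)
  also have "\<dots> = (if a = i \<and> b = t \<and> j = l \<and> k = s then 1 else 0) + (if a = s \<and> b = j \<and> t = l \<and> k = i then (1::'a::field) else 0)"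
    by (simp only: sum_if_const sum_if_eq[OF finite_Om(1) assms(2)] sum_if_eq[OF finite_Om(2) assms(3)] sum_if_eq[OF finite_Om(2) assms(4)])
  finally show ?thesis .
qed

lemma Phi_jtp:
  assumes "i \<in> Om1 p" "k \<in> Om1 p" "s \<in> Om1 p" "j \<in> Om2 q" "l \<in> Om2 q" "t \<in> Om2 q"
  shows "Phi p q (jtp p q (Emat i j) (Emat k l) (Emat s t)) =
     fa_add (if j = l \<and> k = s then Gen i t else fa_zero) (if t = l \<and> k = i then Gen s j else (fa_zero::'a::field fa))"
proof (rule fa_ext)
  fix w
  have e: "\<And>a b. jtp p q (Emat i j) (Emat k l) (Emat s t) a b * Gen a b w =
     (if a = i then (if b = t then (if j = l \<and> k = s then Gen i t w else 0) else 0) else 0)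
   + (if a = s then (if b = j then (if t = l \<and> k = i then Gen s j w else 0) else 0) else (0::'a))"
    unfolding jtp_Emat[OF assms(1,2,4,6)] by (simp add: distrib_right)
  have "Phi p q (jtp p q (Emat i j) (Emat k l) (Emat s t)) w =
     (\<Sum>a\<in>Om1 p. \<Sum>b\<in>Om2 q. (if a = i then (if b = t then (if j = l \<and> k = s then Gen i t w else 0) else 0) else 0))
   + (\<Sum>a\<in>Om1 p. \<Sum>b\<in>Om2 q. (if a = s then (if b = j then (if t = l \<and> k = i then Gen s j w else 0) else 0) else (0::'a)))"
    unfolding Phi_def e by (simp only: sum.distrib)
  also have "\<dots> = (if j = l \<and> k = s then Gen i t w else 0) + (if t = l \<and> k = i then Gen s j w else 0)"
    by (simp only: sum_if_const sum_if_eq[OF finite_Om(1) assms(1)] sum_if_eq[OF finite_Om(1) assms(3)]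
       sum_if_eq[OF finite_Om(2) assms(4)] sum_if_eq[OF finite_Om(2) assms(6)])
  also have "\<dots> = fa_add (if j = l \<and> k = s then Gen i t else fa_zero) (if t = l \<and> k = i then Gen s j else (fa_zero::'a::field fa)) w"
    by (simp add: fa_add_def fa_zero_def)
  finally show "Phi p q (jtp p q (Emat i j) (Emat k l) (Emat s t)) w = fa_add (if j = l \<and> k = s then Gen i t else fa_zero) (if t = l \<and> k = i then Gen s j else (fa_zero::'a::field fa)) w" .
qed

lemma rel_ueq:
  assumes "i \<in> Om1 p" "k \<in> Om1 p" "s \<in> Om1 p" "j \<in> Om2 q" "l \<in> Om2 q" "t \<in> Om2 q"
  shows "ueq p q (fa_add (m3 (Gen i j) (Gen k l) (Gen s t)) (m3 (Gen s t) (Gen k l) (Gen i j)))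
     (fa_add (if j = l \<and> k = s then Gen i t else fa_zero) (if t = l \<and> k = i then Gen s j else (fa_zero::'a::field fa)))"
proof -
  have "fa_sub (fa_add (m3 (Gen i j) (Gen k l) (Gen s t)) (m3 (Gen s t) (Gen k l) (Gen i j)))
     (fa_add (if j = l \<and> k = s then Gen i t else fa_zero) (if t = l \<and> k = i then Gen s j else (fa_zero::'a::field fa)))
    = rel p q i j k l s t" unfolding rel_def Phi_jtp[OF assms] ..
  thus ?thesis using Ideal.gen[OF assms(1,2,3,4,5,6)] unfolding ueq_def by simp
qed


definition famFA :: "(nat \<times> nat \<Rightarrow> ('a::field) fa) \<Rightarrow> bool" where
  "famFA F \<longleftrightarrow> (\<forall>p q. F (p,q) \<in> FA p q)"

definition famrel :: "(nat \<times> nat \<Rightarrow> ('a::field) fa) \<Rightarrow> (nat \<times> nat \<Rightarrow> 'a fa) \<Rightarrow> bool" where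
  "famrel F G \<longleftrightarrow> famFA F \<and> famFA G \<and> (\<forall>p q. ueq p q (F (p,q)) (G (p,q)))"

lemma famrel_part: "part_equivp (famrel :: (nat \<times> nat \<Rightarrow> ('a::field) fa) \<Rightarrow> _)"
proof (rule part_equivpI)
  show "\<exists>x::nat \<times> nat \<Rightarrow> 'a fa. famrel x x"
    by (rule exI[of _ "\<lambda>_. fa_zero"]) (auto simp: famrel_def famFA_def FA_zero ueq_refl)
  show "symp (famrel :: (nat \<times> nat \<Rightarrow> ('a::field) fa) \<Rightarrow> _)"
    by (auto simp: symp_def famrel_def intro: ueq_sym)
  show "transp (famrel :: (nat \<times> nat \<Rightarrow> ('a::field) fa) \<Rightarrow> _)"
    unfolding transp_def famrel_def by (meson ueq_trans)
qed

quotient_type (overloaded) 'a U = "nat \<times> nat \<Rightarrow> ('a::field) fa" / partial: famrel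
  by (rule famrel_part)

lemma famrel_eqI: "famFA F \<Longrightarrow> F = G \<Longrightarrow> famrel F G"
  by (auto simp: famrel_def ueq_refl)

lemma famrel_FA: "famrel F G \<Longrightarrow> famFA F" by (simp add: famrel_def)

lemma famFA_add: "famFA F \<Longrightarrow> famFA G \<Longrightarrow> famFA (\<lambda>pq. fa_add (F pq) (G pq))"
  by (auto simp: famFA_def FA_add)
lemma famFA_mult: "famFA F \<Longrightarrow> famFA G \<Longrightarrow> famFA (\<lambda>pq. fa_mult (F pq) (G pq))"
  by (auto simp: famFA_def FA_mult)
lemma famFA_neg: "famFA F \<Longrightarrow> famFA (\<lambda>pq. fa_neg (F pq))"
  by (auto simp: famFA_def FA_neg)
lemma famFA_sub: "famFA F \<Longrightarrow> famFA G \<Longrightarrow> famFA (\<lambda>pq. fa_sub (F pq) (G pq))"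
  by (auto simp: famFA_def FA_sub)


lemma rawU:
  fixes a b c :: "nat \<times> nat \<Rightarrow> ('a::field) fa"
  assumes "famrel a a" "famrel b b" "famrel c c"
  shows "famrel (\<lambda>pq. fa_add (fa_add (a pq) (b pq)) (c pq)) (\<lambda>pq. fa_add (a pq) (fa_add (b pq) (c pq)))"
    and "famrel (\<lambda>pq. fa_add (a pq) (b pq)) (\<lambda>pq. fa_add (b pq) (a pq))"
    and "famrel (\<lambda>pq. fa_add fa_zero (a pq)) a"
    and "famrel (\<lambda>pq. fa_add (fa_neg (a pq)) (a pq)) (\<lambda>pq. fa_zero)"
    and "famrel (\<lambda>pq. fa_add (a pq) (fa_neg (b pq))) (\<lambda>pq. fa_add (a pq) (fa_neg (b pq)))"
    and "famrel (\<lambda>pq. fa_mult (fa_mult (a pq) (b pq)) (c pq)) (\<lambda>pq. fa_mult (a pq) (fa_mult (b pq) (c pq)))"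
    and "famrel (\<lambda>pq. fa_mult (fa_add (a pq) (b pq)) (c pq)) (\<lambda>pq. fa_add (fa_mult (a pq) (c pq)) (fa_mult (b pq) (c pq)))"
    and "famrel (\<lambda>pq. fa_mult (a pq) (fa_add (b pq) (c pq))) (\<lambda>pq. fa_add (fa_mult (a pq) (b pq)) (fa_mult (a pq) (c pq)))"
proof -
  have A: "famFA a" "famFA b" "famFA c" using assms by (auto simp: famrel_def)
  have Z: "famFA (\<lambda>pq. fa_zero :: 'a fa)" by (simp add: famFA_def FA_zero)
  show "famrel (\<lambda>pq. fa_add (fa_add (a pq) (b pq)) (c pq)) (\<lambda>pq. fa_add (a pq) (fa_add (b pq) (c pq)))"
    by (rule famrel_eqI, (intro famFA_add A)[1], auto simp: fa_add_def add.assoc)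
  show "famrel (\<lambda>pq. fa_add (a pq) (b pq)) (\<lambda>pq. fa_add (b pq) (a pq))"
    by (rule famrel_eqI, (intro famFA_add A)[1], auto simp: fa_add_def add.commute)
  show "famrel (\<lambda>pq. fa_add fa_zero (a pq)) a"
    by (rule famrel_eqI, (intro famFA_add A Z)[1], auto simp: fa_add_def fa_zero_def)
  show "famrel (\<lambda>pq. fa_add (fa_neg (a pq)) (a pq)) (\<lambda>pq. fa_zero)"
    by (rule famrel_eqI, (intro famFA_add famFA_neg A)[1], auto simp: fa_add_def fa_neg_def fa_zero_def)
  show "famrel (\<lambda>pq. fa_add (a pq) (fa_neg (b pq))) (\<lambda>pq. fa_add (a pq) (fa_neg (b pq)))"
    by (rule famrel_eqI, (intro famFA_add famFA_neg A)[1], auto)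
  show "famrel (\<lambda>pq. fa_mult (fa_mult (a pq) (b pq)) (c pq)) (\<lambda>pq. fa_mult (a pq) (fa_mult (b pq) (c pq)))"
    by (rule famrel_eqI, (intro famFA_mult A)[1], auto simp: fa_mult_assoc)
  show "famrel (\<lambda>pq. fa_mult (fa_add (a pq) (b pq)) (c pq)) (\<lambda>pq. fa_add (fa_mult (a pq) (c pq)) (fa_mult (b pq) (c pq)))"
    by (rule famrel_eqI, (intro famFA_mult famFA_add A)[1], auto simp: fa_mult_add_left)
  show "famrel (\<lambda>pq. fa_mult (a pq) (fa_add (b pq) (c pq))) (\<lambda>pq. fa_add (fa_mult (a pq) (b pq)) (fa_mult (a pq) (c pq)))"
    by (rule famrel_eqI, (intro famFA_mult famFA_add A)[1], auto simp: fa_mult_add_right)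
qed

instantiation U :: (field) ring
begin

lift_definition zero_U :: "'a U" is "\<lambda>_. fa_zero"
  by (auto simp: famrel_def famFA_def FA_zero ueq_refl)

lift_definition plus_U :: "'a U \<Rightarrow> 'a U \<Rightarrow> 'a U" is "\<lambda>F G pq. fa_add (F pq) (G pq)"
  unfolding famrel_def famFA_def by (auto simp: FA_add intro!: ueq_add)

lift_definition uminus_U :: "'a U \<Rightarrow> 'a U" is "\<lambda>F pq. fa_neg (F pq)"
  unfolding famrel_def famFA_def by (auto simp: FA_neg intro!: ueq_neg)

lift_definition minus_U :: "'a U \<Rightarrow> 'a U \<Rightarrow> 'a U" is "\<lambda>F G pq. fa_add (F pq) (fa_neg (G pq))"
  unfolding famrel_def famFA_def by (auto simp: FA_add FA_neg intro!: ueq_add ueq_neg)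

lift_definition times_U :: "'a U \<Rightarrow> 'a U \<Rightarrow> 'a U" is "\<lambda>F G pq. fa_mult (F pq) (G pq)"
  unfolding famrel_def famFA_def by (auto simp: FA_mult intro!: ueq_mult)

instance
proof
  fix a b c :: "'a U"
  show "a + b + c = a + (b + c)" by transfer (rule rawU)
  show "a + b = b + a" by transfer (rule rawU)
  show "0 + a = a" by transfer (rule rawU)
  show "- a + a = 0" by transfer (rule rawU)
  show "a - b = a + - b" by transfer (rule rawU)
  show "a * b * c = a * (b * c)" by transfer (rule rawU)
  show "(a + b) * c = a * c + b * c" by transfer (rule rawU)
  show "a * (b + c) = a * b + a * c" by transfer (rule rawU)
qed

end


definition compR :: "nat \<Rightarrow> nat \<Rightarrow> (nat \<times> nat \<Rightarrow> ('a::field) fa) \<Rightarrow> 'a fa \<Rightarrow> bool" where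
  "compR p q F f \<longleftrightarrow> f \<in> FA p q \<and> ueq p q (F (p,q)) f \<and> (\<forall>p' q'. (p',q') \<noteq> (p,q) \<longrightarrow> ueq p' q' (F (p',q')) fa_zero)"

lemma compR_resp: "famrel F G \<Longrightarrow> compR p q F = compR p q G"
  proof (rule ext)
  fix f assume a: "famrel F G"
  hence e: "ueq a b (F (a,b)) (G (a,b))" "ueq a b (G (a,b)) (F (a,b))" for a b
    by (auto simp: famrel_def intro: ueq_sym)
  have "ueq a b (F (a,b)) h \<longleftrightarrow> ueq a b (G (a,b)) h" for a b h
    using e[of a b] ueq_trans by blast
  thus "compR p q F f = compR p q G f" unfolding compR_def by simp
qed

lift_definition comp :: "nat \<Rightarrow> nat \<Rightarrow> ('a::field) U \<Rightarrow> 'a fa \<Rightarrow> bool" is compR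
  by (rule compR_resp)

lift_definition gU :: "nat \<Rightarrow> nat \<Rightarrow> nat \<Rightarrow> nat \<Rightarrow> ('a::field) U" is
  "\<lambda>p q i j pq. if pq = (p,q) \<and> i \<in> Om1 p \<and> j \<in> Om2 q then Gen i j else fa_zero"
  by (auto simp: famrel_def famFA_def ueq_refl FA_zero FA_Gen)

lemma ueq_add0: "ueq p q x fa_zero \<Longrightarrow> ueq p q y fa_zero \<Longrightarrow> ueq p q (fa_add x y) fa_zero"
proof -
  have "fa_add fa_zero fa_zero = (fa_zero :: 'a::field fa)" by (auto simp: fa_add_def fa_zero_def)
  thus "ueq p q x fa_zero \<Longrightarrow> ueq p q y fa_zero \<Longrightarrow> ueq p q (fa_add x y) (fa_zero::'a fa)"
    using ueq_add[of p q x fa_zero y fa_zero] by simp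
qed
lemma ueq_neg0: "ueq p q x fa_zero \<Longrightarrow> ueq p q (fa_neg x) fa_zero"
proof -
  have "fa_neg fa_zero = (fa_zero :: 'a::field fa)" by (auto simp: fa_neg_def fa_zero_def)
  thus "ueq p q x fa_zero \<Longrightarrow> ueq p q (fa_neg x) (fa_zero::'a fa)"
    using ueq_neg[of p q x fa_zero] by simp
qed
lemma ueq_mult0: "ueq p q x fa_zero \<Longrightarrow> y \<in> FA p q \<Longrightarrow> ueq p q (fa_mult x y) fa_zero"
  using ueq_mult[of p q x fa_zero y y] by (simp add: ueq_refl FA_zero fa_mult_zero_left)

lemma compR_gU: "i \<in> Om1 p \<Longrightarrow> j \<in> Om2 q \<Longrightarrow>
   compR p q (\<lambda>pq. if pq = (p,q) \<and> i \<in> Om1 p \<and> j \<in> Om2 q then Gen i j else fa_zero) (Gen i j)"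
  by (auto simp: compR_def ueq_refl FA_Gen)

lemma comp_gU: "i \<in> Om1 p \<Longrightarrow> j \<in> Om2 q \<Longrightarrow> comp p q (gU p q i j) (Gen i j)"
  by transfer (rule compR_gU)

lemma comp_zero: "comp p q 0 fa_zero"
  by transfer (auto simp: compR_def ueq_refl FA_zero)

lemma compR_add: "compR p q x f \<Longrightarrow> compR p q y g \<Longrightarrow> compR p q (\<lambda>pq. fa_add (x pq) (y pq)) (fa_add f g)"
  unfolding compR_def by (auto simp: FA_add intro: ueq_add ueq_add0)

lemma comp_add: "comp p q x f \<Longrightarrow> comp p q y g \<Longrightarrow> comp p q (x + y) (fa_add f g)"
  by transfer (rule compR_add)

lemma compR_neg: "compR p q x f \<Longrightarrow> compR p q (\<lambda>pq. fa_neg (x pq)) (fa_neg f)"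
  unfolding compR_def by (auto simp: FA_neg intro: ueq_neg ueq_neg0)

lemma comp_neg: "comp p q x f \<Longrightarrow> comp p q (- x) (fa_neg f)"
  by transfer (rule compR_neg)

lemma compR_mult: "famrel x x \<Longrightarrow> famrel y y \<Longrightarrow> compR p q x f \<Longrightarrow> compR p q y g
   \<Longrightarrow> compR p q (\<lambda>pq. fa_mult (x pq) (y pq)) (fa_mult f g)"
  unfolding compR_def famrel_def famFA_def by (auto simp: FA_mult intro: ueq_mult ueq_mult0)

lemma comp_mult: "comp p q x f \<Longrightarrow> comp p q y g \<Longrightarrow> comp p q (x * y) (fa_mult f g)"
  by transfer (rule compR_mult)

lemma comp_ueq: "comp p q x f \<Longrightarrow> comp p q x g \<Longrightarrow> ueq p q f g"
  by transfer (auto simp: compR_def intro: ueq_trans ueq_sym)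

lemma compR_eq: "famrel x x \<Longrightarrow> famrel y y \<Longrightarrow> compR p q x f \<Longrightarrow> compR p q y g \<Longrightarrow> ueq p q f g \<Longrightarrow> famrel x y"
  proof -
  assume a: "famrel x x" "famrel y y" "compR p q x f" "compR p q y g" "ueq p q f g"
  have "ueq a b (x (a,b)) (y (a,b))" for a b
  proof (cases "(a,b) = (p,q)")
    case True
    have "ueq p q (x (p,q)) g" using a(3,5) ueq_trans unfolding compR_def by blast
    moreover have "ueq p q g (y (p,q))" using a(4) ueq_sym unfolding compR_def by blast
    ultimately show ?thesis using True ueq_trans by blast
  next
    case False
    hence "ueq a b (x (a,b)) fa_zero" "ueq a b (y (a,b)) fa_zero" using a(3,4) unfolding compR_def by auto
    hence "ueq a b (x (a,b)) fa_zero" "ueq a b fa_zero (y (a,b))" by (auto intro: ueq_sym)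
    thus ?thesis using ueq_trans by blast
  qed
  thus ?thesis using a(1,2) unfolding famrel_def by blast
qed

lemma comp_eq: "comp p q x f \<Longrightarrow> comp p q y g \<Longrightarrow> ueq p q f g \<Longrightarrow> x = y"
  by transfer (rule compR_eq)


definition oth :: "nat \<Rightarrow> nat" where "oth t = (if t = 1 then 2 else 1)"
lemma oth_ne[simp]: "oth t \<noteq> t" "t \<noteq> oth t" by (auto simp: oth_def)
lemma oth_ge1[simp]: "Suc 0 \<le> oth t" by (auto simp: oth_def)
lemma oth_le[simp]: "2 \<le> n \<Longrightarrow> oth t \<le> n" by (auto simp: oth_def)
lemma oth_rng[simp]: "2 \<le> n \<Longrightarrow> oth t \<in> {1..n}" by (auto simp: oth_def)

definition gT :: "(nat \<Rightarrow> nat \<Rightarrow> 'r) \<Rightarrow> nat \<Rightarrow> nat \<Rightarrow> 'r" where "gT g = (\<lambda>a b. g b a)"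
lemma gT_apply[simp]: "gT g a b = g b a" by (simp add: gT_def)
lemma gT_gT[simp]: "gT (gT g) = g" by (simp add: gT_def)

definition Xe :: "(nat \<Rightarrow> nat \<Rightarrow> 'r::ring) \<Rightarrow> nat \<Rightarrow> nat \<Rightarrow> 'r" where
  "Xe g a b = g a 1 * g b 1"
definition Ce :: "(nat \<Rightarrow> nat \<Rightarrow> 'r::ring) \<Rightarrow> nat \<Rightarrow> nat \<Rightarrow> 'r" where
  "Ce g i t = g i 1 * g (oth i) 1 * g (oth i) t"
definition De :: "(nat \<Rightarrow> nat \<Rightarrow> 'r::ring) \<Rightarrow> nat \<Rightarrow> 'r" where
  "De g i = Xe g i (oth i) * Xe g (oth i) i"

lemma half_cancel: "(\<And>z::'r::ring. z + z = 0 \<Longrightarrow> z = 0) \<Longrightarrow> x + x = y + y \<Longrightarrow> x = (y::'r)"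
proof -
  assume tf: "\<And>z::'r. z + z = 0 \<Longrightarrow> z = 0" and e: "x + x = y + y"
  have "(x - y) + (x - y) = 0" using e by (simp add: algebra_simps)
  hence "x - y = 0" by (rule tf)
  thus "x = y" by simp
qed

locale jt =
  fixes p q :: nat and g :: "nat \<Rightarrow> nat \<Rightarrow> 'r::ring"
  assumes p2: "2 \<le> p" and q2: "2 \<le> q"
  and T: "\<And>i j k l s t. i \<in> {1..p} \<Longrightarrow> k \<in> {1..p} \<Longrightarrow> s \<in> {1..p} \<Longrightarrow>
             j \<in> {1..q} \<Longrightarrow> l \<in> {1..q} \<Longrightarrow> t \<in> {1..q} \<Longrightarrow>
     g i j * g k l * g s t + g s t * g k l * g i j =
       (if j = l \<and> k = s then g i t else 0) + (if t = l \<and> k = i then g s j else 0)"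
  and tf: "\<And>x::'r. x + x = 0 \<Longrightarrow> x = 0"
begin

lemma transposed: "jt q p (gT g)"
proof
  show "2 \<le> q" "2 \<le> p" by (rule q2, rule p2)
  show "x + x = 0 \<Longrightarrow> x = 0" for x :: 'r by (rule tf)
  fix i j k l s t
  assume a: "i \<in> {1..q}" "k \<in> {1..q}" "s \<in> {1..q}" "j \<in> {1..p}" "l \<in> {1..p}" "t \<in> {1..p}"
  show "gT g i j * gT g k l * gT g s t + gT g s t * gT g k l * gT g i j =
       (if j = l \<and> k = s then gT g i t else 0) + (if t = l \<and> k = i then gT g s j else 0)"
    using T[OF a(4,5,6,1,2,3)] by (auto simp: add.commute)
qed

lemma cube:
  assumes "i \<in> {1..p}" "k \<in> {1..p}" "j \<in> {1..q}" "l \<in> {1..q}"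
  shows "g i j * g k l * g i j = (if i = k \<and> j = l then g i j else 0)"
proof (rule half_cancel[OF tf])
  show "g i j * g k l * g i j + g i j * g k l * g i j =
    (if i = k \<and> j = l then g i j else 0) + (if i = k \<and> j = l then g i j else 0)"
    using T[OF assms(1,2,1,3,4,3)] by auto
qed

lemma cube1: "i \<in> {1..p} \<Longrightarrow> j \<in> {1..q} \<Longrightarrow> g i j * g i j * g i j = g i j"
  using cube[of i i j j] by simp

lemma hrel:
  assumes "i \<in> {1..p}" "k \<in> {1..p}" "j \<in> {1..q}" "l \<in> {1..q}"
  shows "g i j * g i j * g k l + g k l * g i j * g i j = (if i = k then g i l else 0) + (if j = l then g k j else 0)"
  using T[OF assms(1,1,2,3,3,4)] by (auto simp: mult.assoc)

lemma zero2:
  assumes "i \<in> {1..p}" "k \<in> {1..p}" "j \<in> {1..q}" "l \<in> {1..q}" "i \<noteq> k" "j \<noteq> l"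
  shows "g i j * g k l = 0"
proof -
  have h: "g i j * g i j * g k l = - (g k l * g i j * g i j)"
    using hrel[OF assms(1-4)] assms(5,6) by (simp add: eq_neg_iff_add_eq_0)
  have c: "g i j * g k l * g i j = 0" using cube[OF assms(1-4)] assms(5,6) by simp
  have "g i j * g k l = (g i j * g i j * g i j) * g k l" using cube1[OF assms(1,3)] by simp
  also have "\<dots> = g i j * (g i j * g i j * g k l)" by (simp add: mult.assoc)
  also have "\<dots> = - ((g i j * g k l * g i j) * g i j)" unfolding h by (simp add: mult.assoc)
  also have "\<dots> = 0" by (simp add: c)
  finally show ?thesis .
qed

lemma Xind0:
  assumes "i \<in> {1..p}" "k \<in> {1..p}" "j \<in> {1..q}" "l \<in> {1..q}" "i \<noteq> k" "j \<noteq> l"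
  shows "g i l * g k l = g i j * g k j"
proof -
  have t: "g i j * g k j * g k l + g k l * g k j * g i j = g i l"
    using T[OF assms(1,2,2,3,3,4)] assms by auto
  have z: "g i j * g k l = 0" by (rule zero2) (use assms in auto)
  have hh: "g k l * g k l * g k j + g k j * g k l * g k l = g k j"
    using hrel[OF assms(2,2,4,3)] assms by auto
  have "g i l * g k l = (g i j * g k j * g k l + g k l * g k j * g i j) * g k l" by (simp add: t)
  also have "\<dots> = g i j * g k j * (g k l * g k l) + g k l * g k j * (g i j * g k l)"
    by (simp add: algebra_simps)
  also have "\<dots> = g i j * (g k j * g k l * g k l)" by (simp add: z mult.assoc)
  also have "\<dots> = g i j * (g k j - g k l * g k l * g k j)"
  proof -
    have "g k j * g k l * g k l = g k j - g k l * g k l * g k j" using hh by (metis add_diff_cancel_left')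
    thus ?thesis by simp
  qed
  also have "\<dots> = g i j * g k j - (g i j * g k l) * g k l * g k j" by (simp add: algebra_simps)
  also have "\<dots> = g i j * g k j" by (simp add: z)
  finally show ?thesis .
qed

lemma Xind:
  assumes "i \<in> {1..p}" "k \<in> {1..p}" "j \<in> {1..q}" "l \<in> {1..q}" "i \<noteq> k"
  shows "g i j * g k j = g i l * g k l"
  using Xind0[OF assms(1-5)] by (cases "j = l") auto

end

lemma (in jt) Yind:
  assumes "i \<in> {1..p}" "k \<in> {1..p}" "j \<in> {1..q}" "l \<in> {1..q}" "j \<noteq> l"
  shows "g i j * g i l = g k j * g k l"
  using jt.Xind[OF transposed assms(3,4,1,2,5)] by simp


context jt begin

lemma Cgen1:
  assumes "i \<in> {1..p}" "k \<in> {1..p}" "j \<in> {1..q}" "t \<in> {1..q}" "i \<noteq> k"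
  shows "g i j * g k j * g k t = Ce g i t"
proof -
  have m: "oth t \<in> {1..q}" "oth i \<in> {1..p}" using p2 q2 by auto
  have "g i j * g k j * g k t = g i (oth t) * g k (oth t) * g k t"
    using Xind[OF assms(1,2,3) m(1) assms(5)] by simp
  also have "\<dots> = g i (oth t) * (g k (oth t) * g k t)" by (simp add: mult.assoc)
  also have "\<dots> = g i (oth t) * (g (oth i) (oth t) * g (oth i) t)"
    using Yind[OF assms(2) m(2) m(1) assms(4)] by simp
  also have "\<dots> = (g i (oth t) * g (oth i) (oth t)) * g (oth i) t" by (simp add: mult.assoc)
  also have "\<dots> = g i 1 * g (oth i) 1 * g (oth i) t"
    using Xind[OF assms(1) m(2) m(1), of 1] q2 by simp
  finally show ?thesis by (simp add: Ce_def)
qed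

lemma Cgen:
  assumes "i \<in> {1..p}" "k \<in> {1..p}" "j \<in> {1..q}" "t \<in> {1..q}" "\<not> (i = k \<and> j = t)"
  shows "g i j * g k j * g k t = Ce g i t"
proof (cases "i = k")
  case False thus ?thesis using Cgen1 assms by blast
next
  case True
  have m: "oth i \<in> {1..p}" using p2 by auto
  have "g i j * g k j * g k t = g i j * (g i j * g i t)" using True by (simp add: mult.assoc)
  also have "\<dots> = g i j * (g (oth i) j * g (oth i) t)"
    using Yind[OF assms(1) m assms(3,4)] assms(5) True by simp
  also have "\<dots> = g i j * g (oth i) j * g (oth i) t" by (simp add: mult.assoc)
  also have "\<dots> = Ce g i t" by (rule Cgen1) (use assms m in auto)
  finally show ?thesis .
qed

lemma Xgen: "i \<in> {1..p} \<Longrightarrow> k \<in> {1..p} \<Longrightarrow> j \<in> {1..q} \<Longrightarrow> i \<noteq> k \<Longrightarrow> g i j * g k j = Xe g i k"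
  unfolding Xe_def using q2 by (intro Xind) auto

lemma Dgen1:
  assumes "i \<in> {1..p}" "j \<in> {1..q}"
  shows "Ce g i j * g i j = De g i"
proof -
  have m: "oth j \<in> {1..q}" "oth i \<in> {1..p}" using p2 q2 by auto
  have "Ce g i j = g i (oth j) * g (oth i) (oth j) * g (oth i) j"
    by (rule Cgen[symmetric]) (use assms m in auto)
  hence "Ce g i j * g i j = (g i (oth j) * g (oth i) (oth j)) * (g (oth i) j * g i j)"
    by (simp add: mult.assoc)
  also have "\<dots> = Xe g i (oth i) * Xe g (oth i) i"
    using Xgen[OF assms(1) m(2) m(1)] Xgen[OF m(2) assms(1) assms(2)] by simp
  finally show ?thesis by (simp add: De_def)
qed

end

lemma (in jt) CTgen:
  assumes "i \<in> {1..p}" "k \<in> {1..p}" "l \<in> {1..q}" "t \<in> {1..q}" "\<not> (t = l \<and> k = i)"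
  shows "g k t * g k l * g i l = Ce (gT g) t i"
  using jt.Cgen[OF transposed assms(4,3,2,1)] assms(5) by auto

lemma (in jt) gsplit:
  assumes "i \<in> {1..p}" "j \<in> {1..q}"
  shows "g i j = Ce g i j + Ce (gT g) j i"
proof -
  have m: "oth j \<in> {1..q}" "oth i \<in> {1..p}" using p2 q2 by auto
  have "g i (oth j) * g (oth i) (oth j) * g (oth i) j + g (oth i) j * g (oth i) (oth j) * g i (oth j) = g i j"
    using T[OF assms(1) m(2) m(2) m(1) m(1) assms(2)] by simp
  moreover have "g i (oth j) * g (oth i) (oth j) * g (oth i) j = Ce g i j"
    by (rule Cgen) (use assms m in auto)
  moreover have "g (oth i) j * g (oth i) (oth j) * g i (oth j) = Ce (gT g) j i"
    by (rule CTgen) (use assms m in auto)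
  ultimately show ?thesis by simp
qed

lemma (in jt) hsplit:
  assumes "i \<in> {1..p}" "j \<in> {1..q}"
  shows "g i j * g i j = De g i + De (gT g) j"
proof -
  have "g i j * g i j = (Ce g i j + Ce (gT g) j i) * g i j" using gsplit[OF assms] by simp
  also have "\<dots> = Ce g i j * g i j + Ce (gT g) j i * gT g j i" by (simp add: algebra_simps)
  also have "\<dots> = De g i + De (gT g) j"
    using Dgen1[OF assms] jt.Dgen1[OF transposed assms(2,1)] by simp
  finally show ?thesis .
qed

context jt begin

lemma R1:
  assumes "a \<in> {1..p}" "b \<in> {1..p}" "i \<in> {1..p}" "j \<in> {1..q}" "a \<noteq> b"
  shows "Xe g a b * g i j = (if b = i then Ce g a j else 0)"
proof (cases "b = i")
  case True
  thus ?thesis unfolding Xe_def using Cgen[OF assms(1,2), of 1 j] assms q2 by auto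
next
  case False
  have m: "oth j \<in> {1..q}" using q2 by auto
  have "Xe g a b * g i j = g a (oth j) * (g b (oth j) * g i j)"
    using Xgen[OF assms(1,2) m assms(5)] by (metis mult.assoc)
  also have "g b (oth j) * g i j = 0" by (rule zero2) (use assms m False in auto)
  finally show ?thesis using False by simp
qed

lemma R2:
  assumes "a \<in> {1..p}" "i \<in> {1..p}" "j \<in> {1..q}"
  shows "De g a * g i j = (if a = i then Ce g a j else 0)"
proof (cases "a = i")
  case False
  have m: "oth a \<in> {1..p}" using p2 by auto
  have "De g a * g i j = Xe g a (oth a) * (Xe g (oth a) a * g i j)" by (simp add: De_def mult.assoc)
  also have "Xe g (oth a) a * g i j = 0" using R1[OF m assms(1,2,3)] False by simp
  finally show ?thesis using False by simp
next
  case True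
  have m: "oth j \<in> {1..q}" "oth a \<in> {1..p}" using p2 q2 by auto
  have hh: "g a j * g a j * g (oth a) j + g (oth a) j * g a j * g a j = g (oth a) j"
    using hrel[OF assms(1) m(2) assms(3,3)] by simp
  hence hb: "g (oth a) j * (g a j * g a j) = g (oth a) j - g a j * g a j * g (oth a) j"
    by (metis add_diff_cancel_left' mult.assoc)
  have z: "g (oth a) (oth j) * g a j = 0" by (rule zero2) (use assms m in auto)
  have "De g a * g i j = Ce g a j * g a j * g a j" using Dgen1[OF assms(1,3)] True by simp
  also have "Ce g a j = g a (oth j) * g (oth a) (oth j) * g (oth a) j"
    by (rule Cgen[symmetric]) (use assms m in auto)
  also have "g a (oth j) * g (oth a) (oth j) * g (oth a) j * g a j * g a j
      = g a (oth j) * g (oth a) (oth j) * (g (oth a) j * (g a j * g a j))" by (simp add: mult.assoc)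
  also have "\<dots> = g a (oth j) * g (oth a) (oth j) * g (oth a) j
       - g a (oth j) * (g (oth a) (oth j) * g a j) * g a j * g (oth a) j"
    unfolding hb by (simp add: algebra_simps)
  also have "\<dots> = Ce g a j" using z Cgen[of a "oth a" "oth j" j] assms m by simp
  finally show ?thesis using True by simp
qed

lemma R3:
  assumes "a \<in> {1..p}" "d \<in> {1..q}" "i \<in> {1..p}" "j \<in> {1..q}"
  shows "Ce g a d * g i j = (if d = j then (if a = i then De g a else Xe g a i) else 0)"
proof -
  have m: "oth j \<in> {1..q}" "oth a \<in> {1..p}" "oth d \<in> {1..q}" using p2 q2 by auto
  show ?thesis
  proof (cases "d = j")
    case False
    show ?thesis
    proof (cases "a = i")
      case True
      have "Ce g a d * g i j = g a 1 * g (oth a) 1 * (g (oth a) d * g a j)"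
        using True by (simp add: Ce_def mult.assoc)
      also have "g (oth a) d * g a j = 0" by (rule zero2) (use assms m False in auto)
      finally show ?thesis using False by simp
    next
      case F2: False
      have "Ce g a d = g a (oth d) * g a (oth d) * g a d"
        by (rule Cgen[symmetric]) (use assms m in auto)
      hence "Ce g a d * g i j = g a (oth d) * g a (oth d) * (g a d * g i j)" by (simp add: mult.assoc)
      also have "g a d * g i j = 0" by (rule zero2) (use assms F2 False in auto)
      finally show ?thesis using False by simp
    qed
  next
    case True
    show ?thesis
    proof (cases "a = i")
      case True2: True
      thus ?thesis using Dgen1[OF assms(1,2)] True by simp
    next
      case False
      have hh: "g i j * g i j * g i (oth j) + g i (oth j) * g i j * g i j = g i (oth j)"
        using hrel[OF assms(3,3,4) m(1)] by simp
      hence hb: "g i (oth j) * (g i j * g i j) = g i (oth j) - g i j * g i j * g i (oth j)"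
        by (metis add_diff_cancel_left' mult.assoc)
      have z: "g a (oth j) * g i j = 0" by (rule zero2) (use assms m False in auto)
      have "Ce g a d = g a (oth j) * g i (oth j) * g i j"
        unfolding True by (rule Cgen[symmetric]) (use assms m False True in auto)
      hence "Ce g a d * g i j = g a (oth j) * (g i (oth j) * (g i j * g i j))" by (simp add: mult.assoc)
      also have "\<dots> = g a (oth j) * g i (oth j) - (g a (oth j) * g i j) * g i j * g i (oth j)"
        unfolding hb by (simp add: algebra_simps)
      also have "\<dots> = Xe g a i" using z Xgen[OF assms(1,3) m(1) False] by simp
      finally show ?thesis using True False by simp
    qed
  qed
qed

end


definition Mm :: "(nat \<Rightarrow> nat \<Rightarrow> 'r::ring) \<Rightarrow> nat \<Rightarrow> nat \<Rightarrow> nat \<Rightarrow> 'r" where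
  "Mm g p a b = (if a \<le> p then (if b \<le> p then (if a = b then De g a else Xe g a b) else Ce g a (b - p))
     else (if b \<le> p then Ce (gT g) (a - p) b
           else (if a = b then De (gT g) (a - p) else Xe (gT g) (a - p) (b - p))))"

lemma if_mult0: "(if P then x else 0) * (y::'r::ring) = (if P then x * y else 0)" by simp

context jt begin

lemma GR:
  assumes "a \<in> {1..p+q}" "b \<in> {1..p+q}" "i \<in> {1..p}" "j \<in> {1..q}"
  shows "Mm g p a b * g i j = (if b = i then Mm g p a (j + p) else 0) + (if b = j + p then Mm g p a i else 0)"
proof -
  have tr: "jt q p (gT g)" by (rule transposed)
  show ?thesis
  proof (cases "a \<le> p")
    case True
    show ?thesis
    proof (cases "b \<le> p")
      case True2: True
      show ?thesis
      proof (cases "a = b")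
        case True3: True
        thus ?thesis using True True2 R2[of a i j] assms by (auto simp: Mm_def)
      next
        case False
        thus ?thesis using True True2 R1[of a b i j] assms by (auto simp: Mm_def)
      qed
    next
      case False
      have bp: "b - p = j \<longleftrightarrow> b = j + p" using False by arith
      have r: "Ce g a (b-p) * g i j = (if b - p = j then (if a = i then De g a else Xe g a i) else 0)"
        by (rule R3) (use assms True False in auto)
      show ?thesis using False True r bp assms by (auto simp: Mm_def)
    qed
  next
    case False
    show ?thesis
    proof (cases "b \<le> p")
      case True2: True
      have ap: "a - p = j \<longleftrightarrow> a = j + p" using False by arith
      have r: "Ce (gT g) (a - p) b * gT g j i = (if b = i then (if a - p = j then De (gT g) (a - p) else Xe (gT g) (a - p) j) else 0)"
        by (rule jt.R3[OF tr]) (use assms True2 False in auto)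
      show ?thesis using False True2 r ap assms by (auto simp: Mm_def)
    next
      case F2: False
      show ?thesis
      proof (cases "a = b")
        case True3: True
        have bp: "b - p = j \<longleftrightarrow> b = j + p" using F2 by arith
        have r: "De (gT g) (a - p) * gT g j i = (if a - p = j then Ce (gT g) (a - p) i else 0)"
          by (rule jt.R2[OF tr]) (use assms False in auto)
        show ?thesis using False F2 True3 r bp assms by (auto simp: Mm_def)
      next
        case F3: False
        have bp: "b - p = j \<longleftrightarrow> b = j + p" using F2 by arith
        have ab: "a - p \<noteq> b - p" using F3 False F2 by arith
        have r: "Xe (gT g) (a - p) (b - p) * gT g j i = (if b - p = j then Ce (gT g) (a - p) i else 0)"
          by (rule jt.R1[OF tr]) (use assms False F2 ab in auto)
        show ?thesis using False F2 F3 r bp assms by (auto simp: Mm_def)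
      qed
    qed
  qed
qed

lemma Mprod:
  assumes "a \<in> {1..p+q}" "b \<in> {1..p+q}" "c \<in> {1..p+q}" "d \<in> {1..p+q}"
  shows "Mm g p a b * Mm g p c d = (if b = c then Mm g p a d else 0)"
proof -
  note GR' = GR[OF assms(1)] GR
  have pp: "2 \<le> p" "2 \<le> q" "oth c \<le> p" "oth (c - p) \<le> q" "oth c \<le> q" "oth (c-p) \<le> p"
    using p2 q2 by auto
  show ?thesis
  proof (cases "c \<le> p")
    case True
    show ?thesis
    proof (cases "d \<le> p")
      case True2: True
      show ?thesis
      proof (cases "c = d")
        case True3: True
        have "Mm g p c d = g c 1 * g (oth c) 1 * g (oth c) 1 * g c 1"
          using True True2 True3 by (simp add: Mm_def De_def Xe_def mult.assoc)
        thus ?thesis using assms pp True True3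
          by (simp add: GR' mult.assoc[symmetric] distrib_right if_mult0 del: oth_le oth_rng)
      next
        case False
        have "Mm g p c d = g c 1 * g d 1"
          using True True2 False by (simp add: Mm_def Xe_def)
        thus ?thesis using assms pp True True2 False
          by (simp add: GR' mult.assoc[symmetric] distrib_right if_mult0 del: oth_le oth_rng)
      qed
    next
      case False
      have "Mm g p c d = g c 1 * g (oth c) 1 * g (oth c) (d - p)"
        using True False by (simp add: Mm_def Ce_def)
      moreover have "Suc 0 \<le> d - p" "d - p \<le> q" "d - p + p = d" using False assms by auto
      ultimately show ?thesis using assms pp True False
        by (simp add: GR' mult.assoc[symmetric] distrib_right if_mult0 del: oth_le oth_rng)
    qed
  next
    case False
    show ?thesis
    proof (cases "d \<le> p")
      case True2: True
      have "Mm g p c d = g 1 (c - p) * g 1 (oth (c - p)) * g d (oth (c - p))"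
        using False True2 by (simp add: Mm_def Ce_def)
      moreover have "Suc 0 \<le> c - p" "c - p \<le> q" "c - p + p = c" using False assms by auto
      moreover have "oth (c - p) + p \<noteq> d" "c \<noteq> oth (c - p) + p"
        using True2 False oth_ne(1)[of "c - p"] oth_ge1[of "c - p"] by arith+
      ultimately show ?thesis using assms pp False True2
        by (simp add: GR' mult.assoc[symmetric] distrib_right if_mult0 del: oth_le oth_rng)
    next
      case F2: False
      show ?thesis
      proof (cases "c = d")
        case True3: True
        have "Mm g p c d = g 1 (c - p) * g 1 (oth (c - p)) * g 1 (oth (c - p)) * g 1 (c - p)"
          using False F2 True3 by (simp add: Mm_def De_def Xe_def mult.assoc)
        moreover have "Suc 0 \<le> c - p" "c - p \<le> q" "c - p + p = c" using False assms by auto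
        moreover have "c \<noteq> oth (c - p) + p"
          using False oth_ne(1)[of "c - p"] by arith
        ultimately show ?thesis using assms pp False True3
          by (simp add: GR' mult.assoc[symmetric] distrib_right if_mult0 del: oth_le oth_rng)
      next
        case F3: False
        have "Mm g p c d = g 1 (c - p) * g 1 (d - p)"
          using False F2 F3 by (simp add: Mm_def Xe_def)
        moreover have "Suc 0 \<le> c - p" "c - p \<le> q" "c - p + p = c" "Suc 0 \<le> d - p" "d - p \<le> q" "d - p + p = d"
          using False F2 assms by auto
        ultimately show ?thesis using assms pp False F2 F3
          by (simp add: GR' mult.assoc[symmetric] distrib_right if_mult0 del: oth_le oth_rng)
      qed
    qed
  qed
qed

end


definition A13R :: "(nat \<Rightarrow> nat \<Rightarrow> 'r::ring) \<Rightarrow> nat \<Rightarrow> nat \<Rightarrow> nat \<Rightarrow> nat \<Rightarrow> 'r" where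
  "A13R g p j0 i k = (if i = 1 \<and> k = p + 1 then g 1 j0 * g 1 j0 * g 1 1 else g i 1 * g 1 1 * g 1 (k - p))"

definition AR :: "(nat \<Rightarrow> nat \<Rightarrow> 'r::ring) \<Rightarrow> nat \<Rightarrow> nat \<Rightarrow> nat \<Rightarrow> nat \<Rightarrow> nat \<Rightarrow> nat \<Rightarrow> 'r" where
  "AR g p q j0 t0 i k =
    (if i \<in> Om1 p \<and> k \<in> Om1 p then
       (if i \<noteq> k then g i 1 * g k 1
        else if i = 1 then g 1 1 * g 1 1 * g 1 j0 * g 1 j0
        else - (g 1 1 * g 1 1 * g t0 1 * g t0 1) + g i 1 * g i 1)
     else if i \<in> Om1 p \<and> k \<in> Om3 p q then A13R g p j0 i k
     else if i \<in> Om3 p q \<and> k \<in> Om1 p then - A13R g p j0 k i + g k (i - p)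
     else if i \<in> Om3 p q \<and> k \<in> Om3 p q then
       (if i \<noteq> k then g 1 (i - p) * g 1 (k - p)
        else - (g 1 1 * g 1 1 * g 1 j0 * g 1 j0) + g 1 (i - p) * g 1 (i - p))
     else 0)"

context jt begin

lemma A13_eq:
  assumes "i \<in> {1..p}" "k - p \<in> {1..q}" "k > p" "j0 \<in> {2..q}"
  shows "A13R g p j0 i k = Ce g i (k - p)"
proof (cases "i = 1 \<and> k = p + 1")
  case True
  thus ?thesis unfolding A13R_def using Cgen[of 1 1 j0 1] assms p2 by auto
next
  case False
  hence "\<not> (i = 1 \<and> 1 = k - p)" using assms by auto
  thus ?thesis unfolding A13R_def using Cgen[of i 1 1 "k - p"] assms False p2 by auto
qed

lemma D11:
  assumes "m \<in> {2..q}"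
  shows "g 1 1 * g 1 1 * g 1 m * g 1 m = De g 1"
proof -
  have "g 1 1 * g 1 1 * g 1 m = Ce g 1 m" using Cgen[of 1 1 1 m] assms p2 by auto
  thus ?thesis using Dgen1[of 1 m] assms p2 by auto
qed

lemma DT1:
  assumes "u \<in> {2..p}"
  shows "g 1 1 * g 1 1 * g u 1 * g u 1 = De (gT g) 1"
proof -
  have tr: "jt q p (gT g)" by (rule transposed)
  have "g 1 1 * g 1 1 * g u 1 = Ce (gT g) 1 u" using CTgen[of u 1 1 1] assms q2 by auto
  thus ?thesis using jt.Dgen1[OF tr, of 1 u] assms q2 by auto
qed

lemma AR_M:
  assumes "i \<in> {1..p+q}" "k \<in> {1..p+q}" "j0 \<in> {2..q}" "t0 \<in> {2..p}"
  shows "AR g p q j0 t0 i k = Mm g p i k"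
proof -
  have o: "Om1 p = {1..p}" "Om3 p q = {p+1..p+q}" by (simp_all add: Om1_def Om3_def)
  have tr: "jt q p (gT g)" by (rule transposed)
  consider "i \<le> p" "k \<le> p" | "i \<le> p" "k > p" | "i > p" "k \<le> p" | "i > p" "k > p" by linarith
  thus ?thesis
  proof cases
    case 1
    show ?thesis
    proof (cases "i = k")
      case False thus ?thesis using 1 assms by (auto simp: AR_def Mm_def o Xe_def)
    next
      case True
      show ?thesis
      proof (cases "i = 1")
        case True2: True
        thus ?thesis using 1 True D11[OF assms(3)] assms by (auto simp: AR_def Mm_def o)
      next
        case False
        have "g i 1 * g i 1 = De g i + De (gT g) 1" by (rule hsplit) (use assms 1 q2 in auto)
        thus ?thesis using 1 True False DT1[OF assms(4)] assms by (auto simp: AR_def Mm_def o)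
      qed
    qed
  next
    case 2
    have "A13R g p j0 i k = Ce g i (k - p)" by (rule A13_eq) (use 2 assms in auto)
    thus ?thesis using 2 assms by (auto simp: AR_def Mm_def o)
  next
    case 3
    have a: "A13R g p j0 k i = Ce g k (i - p)" by (rule A13_eq) (use 3 assms in auto)
    have "g k (i - p) = Ce g k (i - p) + Ce (gT g) (i - p) k" by (rule gsplit) (use 3 assms in auto)
    thus ?thesis using 3 assms a by (auto simp: AR_def Mm_def o)
  next
    case 4
    show ?thesis
    proof (cases "i = k")
      case False thus ?thesis using 4 assms by (auto simp: AR_def Mm_def o Xe_def)
    next
      case True
      have "g 1 (i - p) * g 1 (i - p) = De g 1 + De (gT g) (i - p)" by (rule hsplit) (use 4 assms p2 in auto)
      thus ?thesis using 4 True D11[OF assms(3)] assms by (auto simp: AR_def Mm_def o)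
    qed
  qed
qed

end


lemma comp_if: "comp p q x f \<Longrightarrow> comp p q (if P then x else 0) (if P then f else fa_zero)"
  by (cases P) (simp_all add: comp_zero)

lemma U_T:
  assumes "i \<in> Om1 p" "k \<in> Om1 p" "s \<in> Om1 p" "j \<in> Om2 q" "l \<in> Om2 q" "t \<in> Om2 q"
  shows "gU p q i j * gU p q k l * gU p q s t + gU p q s t * gU p q k l * gU p q i j =
    (if j = l \<and> k = s then gU p q i t else 0) + (if t = l \<and> k = i then gU p q s j else (0::'a::field U))"
proof (rule comp_eq)
  show "comp p q (gU p q i j * gU p q k l * gU p q s t + gU p q s t * gU p q k l * gU p q i j)
     (fa_add (m3 (Gen i j) (Gen k l) (Gen s t)) (m3 (Gen s t) (Gen k l) (Gen i j)))"
    using assms by (intro comp_add comp_mult comp_gU)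
  show "comp p q ((if j = l \<and> k = s then gU p q i t else 0) + (if t = l \<and> k = i then gU p q s j else (0::'a::field U)))
     (fa_add (if j = l \<and> k = s then Gen i t else fa_zero) (if t = l \<and> k = i then Gen s j else fa_zero))"
    using assms by (intro comp_add comp_if comp_gU)
  show "ueq p q (fa_add (m3 (Gen i j) (Gen k l) (Gen s t)) (m3 (Gen s t) (Gen k l) (Gen i j)))
     (fa_add (if j = l \<and> k = s then Gen i t else fa_zero) (if t = l \<and> k = i then Gen s j else (fa_zero::'a fa)))"
    by (rule rel_ueq[OF assms])
qed

lemma famrel_half: "famrel x x \<Longrightarrow> famrel (\<lambda>pq. fa_add (x pq) (x pq)) (\<lambda>_. fa_zero)
   \<Longrightarrow> famrel x (\<lambda>_. (fa_zero :: 'a::field_char_0 fa))"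
  unfolding famrel_def by (auto intro: ueq_half)

lemma U_tf: "(x::'a::field_char_0 U) + x = 0 \<Longrightarrow> x = 0"
  by transfer (rule famrel_half)

lemma jtU: "1 < p \<Longrightarrow> 1 < q \<Longrightarrow> jt p q (gU p q :: nat \<Rightarrow> nat \<Rightarrow> 'a::field_char_0 U)"
proof (unfold_locales)
  assume a: "1 < p" "1 < q"
  show "2 \<le> p" "2 \<le> q" using a by auto
  fix i j k l s t
  assume b: "i \<in> {1..p}" "k \<in> {1..p}" "s \<in> {1..p}" "j \<in> {1..q}" "l \<in> {1..q}" "t \<in> {1..q}"
  show "gU p q i j * gU p q k l * gU p q s t + gU p q s t * gU p q k l * gU p q i j =
    (if j = l \<and> k = s then gU p q i t else 0) + (if t = l \<and> k = i then gU p q s j else (0::'a U))"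
    by (rule U_T) (use b in \<open>auto simp: Om1_def Om2_def\<close>)
next
  fix x :: "'a U"
  show "x + x = 0 \<Longrightarrow> x = 0" by (rule U_tf)
qed

lemma comp_ifI: "(P \<Longrightarrow> comp p q x f) \<Longrightarrow> (\<not> P \<Longrightarrow> comp p q y g) \<Longrightarrow> comp p q (if P then x else y) (if P then f else g)"
  by simp

lemma comp_AR:
  assumes "j0 \<in> Om2 q" "t0 \<in> Om1 p"
  shows "comp p q (AR (gU p q) p q j0 t0 i k) (Aelt p q j0 t0 i k :: 'a::field fa)"
  unfolding AR_def Aelt_def A13R_def A13_def
  by (intro comp_ifI comp_add comp_mult comp_neg comp_gU comp_zero; use assms in \<open>auto simp: Om1_def Om2_def Om3_def\<close>)


lemma Om13: "Om1 p \<union> Om3 p q = {1..p+q}" by (auto simp: Om1_def Om3_def)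

theorem mainTheorem3:
  fixes p q :: nat
  assumes "1 < p" and "1 < q" and "p \<noteq> q"
  shows "(\<forall>j0\<in>Om2 q - {1}. \<forall>t0\<in>Om1 p - {1}. \<forall>j0'\<in>Om2 q - {1}. \<forall>t0'\<in>Om1 p - {1}.
            \<forall>i\<in>Om1 p \<union> Om3 p q. \<forall>k\<in>Om1 p \<union> Om3 p q.
              ueq p q (Aelt p q j0 t0 i k :: 'a::field_char_0 fa) (Aelt p q j0' t0' i k))
       \<and> (\<forall>j0\<in>Om2 q - {1}. \<forall>t0\<in>Om1 p - {1}.
            \<forall>i\<in>Om1 p \<union> Om3 p q. \<forall>k\<in>Om1 p \<union> Om3 p q.
            \<forall>l\<in>Om1 p \<union> Om3 p q. \<forall>t\<in>Om1 p \<union> Om3 p q.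
              ueq p q (fa_mult (Aelt p q j0 t0 i k) (Aelt p q j0 t0 l t) :: 'a fa)
                      (fa_smult (if k = l then 1 else 0) (Aelt p q j0 t0 i t)))
       \<and> (\<forall>j0\<in>Om2 q - {1}. \<forall>t0\<in>Om1 p - {1}. \<forall>i\<in>Om1 p. \<forall>j\<in>Om2 q.
              ueq p q (Gen i j :: 'a fa)
                      (fa_add (Aelt p q j0 t0 i (j + p)) (Aelt p q j0 t0 (j + p) i)))"
proof -
  interpret J: jt p q "gU p q :: nat \<Rightarrow> nat \<Rightarrow> 'a U" by (rule jtU) (use assms in auto)
  let ?A = "\<lambda>j0 t0 i k. AR (gU p q :: nat \<Rightarrow> nat \<Rightarrow> 'a U) p q j0 t0 i k"
  have rng: "j0 \<in> {2..q}" "t0 \<in> {2..p}" if "j0 \<in> Om2 q - {1}" "t0 \<in> Om1 p - {1}" for j0 t0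
    using that by (auto simp: Om1_def Om2_def)
  have cA: "comp p q (?A j0 t0 i k) (Aelt p q j0 t0 i k :: 'a fa)"
    if "j0 \<in> Om2 q - {1}" "t0 \<in> Om1 p - {1}" for j0 t0 i k
    by (rule comp_AR) (use that in auto)
  have AM: "?A j0 t0 i k = Mm (gU p q) p i k"
    if "j0 \<in> Om2 q - {1}" "t0 \<in> Om1 p - {1}" "i \<in> Om1 p \<union> Om3 p q" "k \<in> Om1 p \<union> Om3 p q" for j0 t0 i k
    using J.AR_M[of i k j0 t0] rng[OF that(1,2)] that(3,4) by (simp add: Om13)
  show ?thesis
  proof (intro conjI ballI)
    fix j0 t0 j0' t0' i k
    assume a: "j0 \<in> Om2 q - {1}" "t0 \<in> Om1 p - {1}" "j0' \<in> Om2 q - {1}" "t0' \<in> Om1 p - {1}"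
      "i \<in> Om1 p \<union> Om3 p q" "k \<in> Om1 p \<union> Om3 p q"
    have "?A j0 t0 i k = ?A j0' t0' i k" using AM[OF a(1,2,5,6)] AM[OF a(3,4,5,6)] by simp
    thus "ueq p q (Aelt p q j0 t0 i k :: 'a fa) (Aelt p q j0' t0' i k)"
      using cA[OF a(1,2), of i k] cA[OF a(3,4), of i k] by (metis comp_ueq)
  next
    fix j0 t0 i k l t
    assume a: "j0 \<in> Om2 q - {1}" "t0 \<in> Om1 p - {1}" "i \<in> Om1 p \<union> Om3 p q" "k \<in> Om1 p \<union> Om3 p q"
      "l \<in> Om1 p \<union> Om3 p q" "t \<in> Om1 p \<union> Om3 p q"
    have c1: "comp p q (?A j0 t0 i k * ?A j0 t0 l t) (fa_mult (Aelt p q j0 t0 i k) (Aelt p q j0 t0 l t) :: 'a fa)"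
      by (intro comp_mult cA a)
    have e: "?A j0 t0 i k * ?A j0 t0 l t = (if k = l then ?A j0 t0 i t else 0)"
      using AM[OF a(1,2,3,4)] AM[OF a(1,2,5,6)] AM[OF a(1,2,3,6)] J.Mprod[of i k l t] a(3-6)
      by (simp add: Om13)
    have c2: "comp p q (if k = l then ?A j0 t0 i t else 0) (fa_smult (if k = l then 1 else 0) (Aelt p q j0 t0 i t) :: 'a fa)"
    proof (cases "k = l")
      case True
      have "fa_smult 1 (Aelt p q j0 t0 i t) = (Aelt p q j0 t0 i t :: 'a fa)" by (auto simp: fa_smult_def)
      thus ?thesis using True cA[OF a(1,2), of i t] by simp
    next
      case False
      have "fa_smult 0 (Aelt p q j0 t0 i t) = (fa_zero :: 'a fa)" by (auto simp: fa_smult_def fa_zero_def)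
      thus ?thesis using False comp_zero by simp
    qed
    show "ueq p q (fa_mult (Aelt p q j0 t0 i k) (Aelt p q j0 t0 l t) :: 'a fa)
                      (fa_smult (if k = l then 1 else 0) (Aelt p q j0 t0 i t))"
      using c1 c2 unfolding e by (rule comp_ueq)
  next
    fix j0 t0 i j
    assume a: "j0 \<in> Om2 q - {1}" "t0 \<in> Om1 p - {1}" "i \<in> Om1 p" "j \<in> Om2 q"
    have c1: "comp p q (gU p q i j) (Gen i j :: 'a fa)" using a by (intro comp_gU)
    have c2: "comp p q (?A j0 t0 i (j + p) + ?A j0 t0 (j + p) i)
       (fa_add (Aelt p q j0 t0 i (j + p)) (Aelt p q j0 t0 (j + p) i) :: 'a fa)"
      by (intro comp_add cA a)
    have "?A j0 t0 i (j + p) + ?A j0 t0 (j + p) i = gU p q i j"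
      using a by (auto simp: AR_def Om1_def Om2_def Om3_def)
    thus "ueq p q (Gen i j :: 'a fa) (fa_add (Aelt p q j0 t0 i (j + p)) (Aelt p q j0 t0 (j + p) i))"
      using c1 c2 by (metis comp_ueq)
  qed
qed


end
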